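(* Let $\{x_k\}$ be generated by the Subgradient-InexP method with the exogenous stepsize rule, under the standing assumptions. Then $\liminf_k f(x_k)=f^*$ (where $f^*=\inf_{x\in C}f(x)$, possibly $-\infty$). In addition, if $\Omega^*\neq\varnothing$, then $\{x_k\}$ converges to a point $x_*\in\Omega^*$.
   Context: Problem: minimize a convex $f:\mathbb{R}^n\to\mathbb{R}$ over a nonempty closed convex $C\subset\mathbb{R}^n$; $f^*:=\inf_{x\in C}f(x)$ and $\Omega^*$ is the (possibly empty) set of minimizers of $f$ on $C$. For $\epsilon\ge0$, $\partial_\epsilon f(x):=\{s: f(y)\ge f(x)+\langle s,y-x\rangle-\epsilon\ \forall y\}$. Relative error tolerance function: any $\varphi_{\gamma,\theta,\lambda}:(\mathbb{R}^n)^3\to[0,\infty)$ with $\varphi_{\gamma,\theta,\lambda}(u,v,w)\le\gamma\|v-u\|^2+\theta\|w-v\|^2+\lambda\|w-u\|^2$; for $u\in C$, $\mathcal{P}_C(\varphi_{\gamma,\theta,\lambda},u,v):=\{w\in C:\langle v-w,z-w\rangle\le\varphi_{\gamma,\theta,\lambda}(u,v,w)\ \forall z\in C\}$. Subgradient-InexP method: $x_0\in C$; at iteration $k$, if $0\in\partial f(x_k)$ stop; otherwise choose nonzero $s_k\in\partial_{\epsilon_k}f(x_k)$, stepsize $t_k>0$, and $x_{k+1}\in\mathcal{P}_C(\varphi_{\gamma_k,\theta_k,\lambda_k},x_k,x_k-t_ks_k)$. Standing assumptions: $\gamma_k\in[0,\bar\gamma)$, $\theta_k\in[0,\bar\theta)$,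 $\lambda_k\in[0,\bar\lambda)$ with $\bar\gamma\ge0$, $\bar\theta,\bar\lambda\in[0,1/2)$; the sequence is infinite. Exogenous stepsize rule: $\mu\ge0$; $\{\alpha_k\}$, $\{\epsilon_k\}$ nonnegative, $\{\epsilon_k\}$ nonincreasing, $\sum_k\alpha_k=+\infty$, $\sum_k\alpha_k^2<+\infty$, $\epsilon_k\le\mu\alpha_k$; $t_k:=\alpha_k/\eta_k$, $\eta_k:=\max\{1,\|s_k\|\}$. *)

theory Defs
  imports "HOL-Analysis.Analysis"
begin

definition eps_subdiff :: "('a::real_inner \<Rightarrow> real) \<Rightarrow> real \<Rightarrow> 'a \<Rightarrow> 'a set" where
  "eps_subdiff f \<epsilon> x = {s. \<forall>y. f y \<ge> f x + inner s (y - x) - \<epsilon>}"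

definition rel_err_tol :: "('a::real_normed_vector \<Rightarrow> 'a \<Rightarrow> 'a \<Rightarrow> real) \<Rightarrow> real \<Rightarrow> real \<Rightarrow> real \<Rightarrow> bool" where
  "rel_err_tol \<phi> \<gamma> \<theta> lam \<longleftrightarrow>
     (\<forall>u v w. 0 \<le> \<phi> u v w \<and>
        \<phi> u v w \<le> \<gamma> * (norm (v - u))\<^sup>2 + \<theta> * (norm (w - v))\<^sup>2 + lam * (norm (w - u))\<^sup>2)"

definition inexact_proj :: "'a::real_inner set \<Rightarrow> ('a \<Rightarrow> 'a \<Rightarrow> 'a \<Rightarrow> real) \<Rightarrow> 'a \<Rightarrow> 'a \<Rightarrow> 'a set" where
  "inexact_proj C \<phi> u v = {w \<in> C. \<forall>z\<in>C. inner (v - w) (z - w) \<le> \<phi> u v w}"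

definition minimizers :: "('a \<Rightarrow> real) \<Rightarrow> 'a set \<Rightarrow> 'a set" where
  "minimizers f C = {x \<in> C. \<forall>y\<in>C. f x \<le> f y}"

end

theory Submission imports Defs begin

lemma proj_small:
  fixes u v w :: "'a::real_inner"
  assumes u: "u \<in> C" and w: "w \<in> inexact_proj C \<phi> u v"
    and tol: "rel_err_tol \<phi> \<gamma> \<theta> l"
    and g: "0 \<le> \<gamma>" "\<gamma> \<le> \<gamma>b" and th: "0 \<le> \<theta>" "\<theta> \<le> \<theta>b" "\<theta>b < 1/2"
    and lm: "0 \<le> l" "l \<le> lb" "lb < 1/2"
  shows "norm (w - u) \<le> ((\<gamma>b + 2) / (1 - \<theta>b - lb)) * norm (v - u)"
proof -
  define a where "a = w - u"
  define b where "b = v - u"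
  define A where "A = norm a"
  define B where "B = norm b"
  define p where "p = inner a b"
  define d where "d = 1 - \<theta>b - lb"
  have d: "0 < d" "d \<le> 1" using th lm by (auto simp: d_def)
  have "inner (v - w) (u - w) \<le> \<phi> u v w" using w u by (auto simp: inexact_proj_def)
  also have "\<dots> \<le> \<gamma> * (norm (v - u))\<^sup>2 + \<theta> * (norm (w - v))\<^sup>2 + l * (norm (w - u))\<^sup>2"
    using tol by (auto simp: rel_err_tol_def)
  finally have 1: "inner (v - w) (u - w) \<le> \<gamma> * (norm (v - u))\<^sup>2 + \<theta> * (norm (w - v))\<^sup>2 + l * (norm (w - u))\<^sup>2" .
  have e1: "inner (v - w) (u - w) = A\<^sup>2 - p"
    unfolding A_def p_def a_def b_def power2_norm_eq_inner
    by (simp add: inner_diff_left inner_diff_right inner_commute)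
  have e2: "(norm (w - v))\<^sup>2 = A\<^sup>2 - 2*p + B\<^sup>2"
    unfolding A_def B_def p_def a_def b_def power2_norm_eq_inner
    by (simp add: inner_diff_left inner_diff_right inner_commute)
  have 2: "(1 - \<theta> - l) * A\<^sup>2 \<le> (1 - 2*\<theta>) * p + (\<gamma> + \<theta>) * B\<^sup>2"
    using 1 e1 e2 unfolding A_def[symmetric] B_def[symmetric] a_def[symmetric] b_def[symmetric]
    by (simp add: algebra_simps)
  have pAB: "p \<le> A * B" unfolding p_def A_def B_def by (rule order_trans[OF abs_ge_self Cauchy_Schwarz_ineq2])
  have AB0: "0 \<le> A" "0 \<le> B" by (auto simp: A_def B_def)
  have 3: "(1 - 2*\<theta>) * p \<le> A * B"
  proof (cases "p \<ge> 0")
    case True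
    then have "0 \<le> \<theta> * p" using th by simp
    then have "(1 - 2*\<theta>) * p \<le> p" by (simp add: algebra_simps)
    then show ?thesis using pAB by linarith
  next
    case False
    then have "(1 - 2*\<theta>) * p \<le> 0" using th by (simp add: mult_nonneg_nonpos)
    then show ?thesis using AB0 by (meson mult_nonneg_nonneg order_trans)
  qed
  have 4: "d * A\<^sup>2 \<le> (1 - \<theta> - l) * A\<^sup>2" using th lm by (auto simp: d_def intro!: mult_right_mono)
  have 5: "(\<gamma> + \<theta>) * B\<^sup>2 \<le> (\<gamma>b + 1) * B\<^sup>2" using th g by (auto intro!: mult_right_mono)
  have 6: "d * A\<^sup>2 \<le> A * B + (\<gamma>b + 1) * B\<^sup>2" using 2 3 4 5 by linarith
  have "A \<le> ((\<gamma>b + 2) / d) * B"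
  proof (cases "A \<le> B")
    case True
    have "1 \<le> (\<gamma>b + 2) / d" using d g by (simp add: field_simps)
    then have "1 * B \<le> ((\<gamma>b + 2) / d) * B" using AB0 by (intro mult_right_mono) auto
    then show ?thesis using True by linarith
  next
    case False
    then have Ap: "0 < A" using AB0 by linarith
    have "(\<gamma>b + 1) * B\<^sup>2 \<le> (\<gamma>b + 1) * (A * B)" using False AB0 g
      by (intro mult_left_mono) (auto simp: power2_eq_square intro: mult_right_mono)
    then have "d * A * A \<le> (\<gamma>b + 2) * B * A" using 6 by (simp add: power2_eq_square algebra_simps)
    then have "d * A \<le> (\<gamma>b + 2) * B" using Ap by simp
    then show ?thesis using d by (simp add: field_simps)
  qed
  then show ?thesis by (simp add: A_def B_def a_def b_def d_def)
qed

lemma proj_step: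
  fixes u v w z :: "'a::real_inner"
  assumes u: "u \<in> C" and w: "w \<in> inexact_proj C \<phi> u v" and z: "z \<in> C"
    and tol: "rel_err_tol \<phi> \<gamma> \<theta> l"
    and g: "0 \<le> \<gamma>" "\<gamma> \<le> \<gamma>b" and th: "0 \<le> \<theta>" "\<theta> \<le> \<theta>b" "\<theta>b < 1/2"
    and lm: "0 \<le> l" "l \<le> lb" "lb < 1/2"
  shows "(norm (w - z))\<^sup>2 \<le> (norm (v - z))\<^sup>2 + (2*\<gamma>b + ((\<gamma>b + 2) / (1 - \<theta>b - lb))\<^sup>2) * (norm (v - u))\<^sup>2"
proof -
  define c where "c = (\<gamma>b + 2) / (1 - \<theta>b - lb)"
  define A where "A = norm (w - u)"
  define B where "B = norm (v - u)"
  have AB0: "0 \<le> A" "0 \<le> B" by (auto simp: A_def B_def)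
  have Ac: "A \<le> c * B" using proj_small[OF u w tol g th lm] by (simp add: A_def B_def c_def)
  have A2: "A\<^sup>2 \<le> c\<^sup>2 * B\<^sup>2"
  proof -
    have "A\<^sup>2 \<le> (c*B)\<^sup>2" using Ac AB0 by (intro power_mono) auto
    then show ?thesis by (simp add: power_mult_distrib)
  qed
  have "inner (v - w) (z - w) \<le> \<phi> u v w" using w z by (auto simp: inexact_proj_def)
  also have "\<dots> \<le> \<gamma> * B\<^sup>2 + \<theta> * (norm (w - v))\<^sup>2 + l * A\<^sup>2"
    using tol by (auto simp: rel_err_tol_def A_def B_def)
  finally have 1: "inner (v - w) (z - w) \<le> \<gamma> * B\<^sup>2 + \<theta> * (norm (w - v))\<^sup>2 + l * A\<^sup>2" .
  have id: "(norm (w - z))\<^sup>2 = (norm (v - z))\<^sup>2 - (norm (v - w))\<^sup>2 + 2 * inner (v - w) (z - w)"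
    unfolding power2_norm_eq_inner
    by (simp add: inner_diff_left inner_diff_right inner_commute algebra_simps)
  have nwv: "norm (w - v) = norm (v - w)" by (rule norm_minus_commute)
  have t1: "2 * (\<theta> * (norm (v - w))\<^sup>2) \<le> (norm (v - w))\<^sup>2"
  proof -
    have "2 * \<theta> \<le> 1" using th by simp
    then have "(2*\<theta>) * (norm (v - w))\<^sup>2 \<le> 1 * (norm (v - w))\<^sup>2" by (intro mult_right_mono) auto
    then show ?thesis by simp
  qed
  have t2: "2 * (l * A\<^sup>2) \<le> c\<^sup>2 * B\<^sup>2"
  proof -
    have "2 * l \<le> 1" using lm by simp
    then have "(2*l) * A\<^sup>2 \<le> 1 * A\<^sup>2" by (intro mult_right_mono) auto
    then show ?thesis using A2 by simp
  qed
  have t3: "2 * (\<gamma> * B\<^sup>2) \<le> 2 * \<gamma>b * B\<^sup>2" using g by (auto intro!: mult_right_mono)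
  have "(norm (w - z))\<^sup>2 \<le> (norm (v - z))\<^sup>2 + (2*\<gamma>b + c\<^sup>2) * B\<^sup>2"
    using id 1 t1 t2 t3 nwv by (simp add: algebra_simps)
  then show ?thesis by (simp add: c_def B_def)
qed

lemma subgrad_step:
  fixes u s z :: "'a::real_inner"
  assumes s: "s \<in> eps_subdiff f e u" and t: "0 \<le> t"
  shows "(norm (u - t *\<^sub>R s - z))\<^sup>2 \<le> (norm (u - z))\<^sup>2 + 2 * t * (f z - f u) + 2 * t * e + t\<^sup>2 * (norm s)\<^sup>2"
proof -
  have id: "(norm (u - t *\<^sub>R s - z))\<^sup>2 = (norm (u - z))\<^sup>2 + 2 * t * inner s (z - u) + t\<^sup>2 * (norm s)\<^sup>2"
    unfolding power2_norm_eq_inner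
    by (simp add: inner_diff_left inner_diff_right inner_commute algebra_simps power2_eq_square)
  have "f z \<ge> f u + inner s (z - u) - e" using s by (auto simp: eps_subdiff_def)
  then have "inner s (z - u) \<le> f z - f u + e" by simp
  then have "t * inner s (z - u) \<le> t * (f z - f u + e)" using t by (rule mult_left_mono)
  then show ?thesis using id by (simp add: algebra_simps)
qed

lemma subgrad_bound:
  fixes f :: "'a::euclidean_space \<Rightarrow> real"
  assumes cont: "continuous_on UNIV f"
  shows "\<exists>M. \<forall>x s e. norm x \<le> R \<longrightarrow> e \<le> E \<longrightarrow> s \<in> eps_subdiff f e x \<longrightarrow> norm s \<le> M"
proof -
  have "compact (f ` cball 0 (R+1))"
    by (rule compact_continuous_image) (auto intro: continuous_on_subset[OF cont])
  then have "bounded (f ` cball 0 (R+1))" by (rule compact_imp_bounded)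
  then obtain B where B: "\<And>y. y \<in> cball 0 (R+1) \<Longrightarrow> \<bar>f y\<bar> \<le> B"
    unfolding bounded_real by blast
  show ?thesis
  proof (intro exI allI impI)
    fix x s e assume x: "norm x \<le> R" and e: "e \<le> E" and s: "s \<in> eps_subdiff f e x"
    show "norm s \<le> 2*B + \<bar>E\<bar>"
    proof (cases "s = 0")
      case True
      have "x \<in> cball 0 (R+1)" using x by auto
      then have "0 \<le> B" using B[of x] by linarith
      then show ?thesis using True by simp
    next
      case False
      define y where "y = x + (1 / norm s) *\<^sub>R s"
      have ny: "norm (y - x) = 1" using False by (simp add: y_def)
      have "norm y \<le> norm x + norm (y - x)" by (metis add.commute diff_add_cancel norm_triangle_ineq)
      then have "y \<in> cball 0 (R+1)" using x ny by auto
      moreover have "x \<in> cball 0 (R+1)" using x by auto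
      moreover have "inner s (y - x) = norm s"
        using False by (simp add: y_def power2_norm_eq_inner[symmetric] power2_eq_square)
      moreover have "f y \<ge> f x + inner s (y - x) - e" using s by (auto simp: eps_subdiff_def)
      ultimately show ?thesis using B[of x] B[of y] e abs_ge_self[of E] by linarith
    qed
  qed
qed

lemma quasi_fejer:
  fixes a e :: "nat \<Rightarrow> real"
  assumes step: "\<And>k. a (Suc k) \<le> a k + e k" and a0: "\<And>k. 0 \<le> a k"
    and e0: "\<And>k. 0 \<le> e k" and se: "summable e"
  shows "convergent a"
proof -
  define b where "b k = a k - (\<Sum>i<k. e i)" for k
  have "decseq b"
    by (rule decseq_SucI) (simp add: b_def, smt (verit) step)
  moreover have "\<forall>k. - suminf e \<le> b k"
  proof
    fix k
    have "(\<Sum>i<k. e i) \<le> suminf e" using se e0 by (intro sum_le_suminf) auto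
    then show "- suminf e \<le> b k" using a0[of k] by (simp add: b_def)
  qed
  ultimately obtain L where L: "b \<longlonglongrightarrow> L" using decseq_convergent by blast
  have "(\<lambda>k. \<Sum>i<k. e i) \<longlonglongrightarrow> suminf e" using se by (rule summable_LIMSEQ)
  then have "(\<lambda>k. b k + (\<Sum>i<k. e i)) \<longlonglongrightarrow> L + suminf e" using L by (intro tendsto_add)
  then show ?thesis by (auto simp: b_def convergent_def)
qed

lemma sum_split_shift:
  fixes g :: "nat \<Rightarrow> real"
  shows "(\<Sum>k<N+m. g k) = (\<Sum>k<N. g k) + (\<Sum>i<m. g (N+i))"
  by (induction m) auto

theorem mainTheorem5:
  fixes f :: "'a::euclidean_space \<Rightarrow> real"
    and C :: "'a set"
    and x s :: "nat \<Rightarrow> 'a"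
    and \<phi> :: "nat \<Rightarrow> 'a \<Rightarrow> 'a \<Rightarrow> 'a \<Rightarrow> real"
    and \<gamma> \<theta> lam \<alpha> \<epsilon> :: "nat \<Rightarrow> real"
    and \<gamma>b \<theta>b lamb \<mu> :: real
  assumes f_convex: "convex_on UNIV f"
    and C_ne: "C \<noteq> {}" and C_closed: "closed C" and C_convex: "convex C"
    and bars: "0 \<le> \<gamma>b" "0 \<le> \<theta>b" "\<theta>b < 1/2" "0 \<le> lamb" "lamb < 1/2"
    and params: "\<And>k. 0 \<le> \<gamma> k \<and> \<gamma> k < \<gamma>b"
                "\<And>k. 0 \<le> \<theta> k \<and> \<theta> k < \<theta>b"
                "\<And>k. 0 \<le> lam k \<and> lam k < lamb"
    and tol: "\<And>k. rel_err_tol (\<phi> k) (\<gamma> k) (\<theta> k) (lam k)"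
    and mu: "0 \<le> \<mu>"
    and alpha_nonneg: "\<And>k. 0 \<le> \<alpha> k"
    and eps_nonneg: "\<And>k. 0 \<le> \<epsilon> k"
    and eps_noninc: "decseq \<epsilon>"
    and alpha_div: "filterlim (\<lambda>n. \<Sum>k<n. \<alpha> k) at_top sequentially"
    and alpha_sq: "summable (\<lambda>k. (\<alpha> k)\<^sup>2)"
    and eps_le: "\<And>k. \<epsilon> k \<le> \<mu> * \<alpha> k"
    and x0: "x 0 \<in> C"
    and no_stop: "\<And>k. 0 \<notin> eps_subdiff f 0 (x k)"
    and s_sub: "\<And>k. s k \<in> eps_subdiff f (\<epsilon> k) (x k)"
    and s_nz: "\<And>k. s k \<noteq> 0"
    and step: "\<And>k. x (Suc k) \<in> inexact_proj C (\<phi> k) (x k)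
                        (x k - (\<alpha> k / max 1 (norm (s k))) *\<^sub>R s k)"
  shows "liminf (\<lambda>k. ereal (f (x k))) = (INF y\<in>C. ereal (f y)) \<and>
         (minimizers f C \<noteq> {} \<longrightarrow> (\<exists>xs\<in>minimizers f C. x \<longlonglongrightarrow> xs))"
proof -
  define c where "c = (\<gamma>b + 2) / (1 - \<theta>b - lamb)"
  define K where "K = 2*\<gamma>b + c\<^sup>2"
  define L where "L = 2*\<mu> + 1 + K"
  define t where "t k = \<alpha> k / max 1 (norm (s k))" for k
  have K0: "0 \<le> K" using bars by (simp add: K_def)
  have L0: "0 \<le> L" using K0 mu by (simp add: L_def)
  have xC: "x k \<in> C" for k
  proof (cases k)
    case 0 then show ?thesis using x0 by simp
  next
    case (Suc j) then show ?thesis using step[of j] by (simp add: inexact_proj_def)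
  qed
  have t0: "0 \<le> t k" for k using alpha_nonneg[of k] by (simp add: t_def)
  have tle: "t k \<le> \<alpha> k" for k
    using alpha_nonneg[of k] by (simp add: t_def divide_le_eq_1 field_simps mult_le_cancel_left1)
  have tsle: "t k * norm (s k) \<le> \<alpha> k" for k
  proof -
    have "norm (s k) \<le> max 1 (norm (s k))" by simp
    then have "\<alpha> k * norm (s k) \<le> \<alpha> k * max 1 (norm (s k))" using alpha_nonneg[of k] by (rule mult_left_mono)
    then show ?thesis by (simp add: t_def field_simps)
  qed
  have key: "(norm (x (Suc k) - z))\<^sup>2 \<le> (norm (x k - z))\<^sup>2 + 2 * t k * (f z - f (x k)) + L * (\<alpha> k)\<^sup>2"
    if z: "z \<in> C" for k z
  proof -
    define v where "v = x k - t k *\<^sub>R s k"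
    have w: "x (Suc k) \<in> inexact_proj C (\<phi> k) (x k) v" using step[of k] by (simp add: v_def t_def)
    have p1: "(norm (x (Suc k) - z))\<^sup>2 \<le> (norm (v - z))\<^sup>2 + K * (norm (v - x k))\<^sup>2"
      using proj_step[OF xC w z tol, of "\<gamma>b" "\<theta>b" lamb] params[of k] bars
      by (simp add: K_def c_def)
    have nv: "norm (v - x k) = t k * norm (s k)" using t0[of k] by (simp add: v_def)
    have "(norm (v - x k))\<^sup>2 \<le> (\<alpha> k)\<^sup>2" unfolding nv using tsle[of k] t0[of k]
      by (intro power_mono) auto
    then have p2: "K * (norm (v - x k))\<^sup>2 \<le> K * (\<alpha> k)\<^sup>2" using K0 by (rule mult_left_mono)
    have p3: "(norm (v - z))\<^sup>2 \<le> (norm (x k - z))\<^sup>2 + 2 * t k * (f z - f (x k)) + 2 * t k * \<epsilon> k + (t k)\<^sup>2 * (norm (s k))\<^sup>2"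
      unfolding v_def by (rule subgrad_step[OF s_sub t0])
    have "t k * \<epsilon> k \<le> \<alpha> k * (\<mu> * \<alpha> k)" using tle[of k] t0[of k] eps_le[of k] eps_nonneg[of k]
      by (intro mult_mono) auto
    then have p4: "2 * t k * \<epsilon> k \<le> 2 * \<mu> * (\<alpha> k)\<^sup>2" by (simp add: power2_eq_square algebra_simps)
    have "(t k * norm (s k))\<^sup>2 \<le> (\<alpha> k)\<^sup>2" using tsle[of k] t0[of k] by (intro power_mono) auto
    then have p5: "(t k)\<^sup>2 * (norm (s k))\<^sup>2 \<le> (\<alpha> k)\<^sup>2" by (simp add: power_mult_distrib)
    show ?thesis using p1 p2 p3 p4 p5 by (simp add: L_def algebra_simps)
  qed

  have cont: "continuous_on UNIV f" by (rule convex_on_continuous[OF open_UNIV f_convex])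
  have epsE: "\<epsilon> k \<le> \<epsilon> 0" for k using eps_noninc by (simp add: decseq_def)
  have lower: "(INF y\<in>C. ereal (f y)) \<le> liminf (\<lambda>k. ereal (f (x k)))"
    by (rule Liminf_bounded, rule always_eventually) (metis INF_lower xC)
  have upper: "liminf (\<lambda>k. ereal (f (x k))) \<le> (INF y\<in>C. ereal (f y))"
  proof (rule ccontr)
    assume "\<not> ?thesis"
    then have "(INF y\<in>C. ereal (f y)) < liminf (\<lambda>k. ereal (f (x k)))" by simp
    then obtain z where z: "z \<in> C" and zl: "ereal (f z) < liminf (\<lambda>k. ereal (f (x k)))"
      by (auto simp: INF_less_iff)
    obtain r where r1: "ereal (f z) < ereal r" and r2: "ereal r < liminf (\<lambda>k. ereal (f (x k)))"
      using ereal_dense2[OF zl] by blast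
    define \<delta> where "\<delta> = r - f z"
    have \<delta>: "0 < \<delta>" using r1 by (simp add: \<delta>_def)
    have "\<forall>\<^sub>F k in sequentially. ereal r < ereal (f (x k))" by (rule less_LiminfD[OF r2])
    then obtain N where N: "\<And>k. k \<ge> N \<Longrightarrow> r < f (x k)" by (auto simp: eventually_sequentially)
    define a where "a k = (norm (x k - z))\<^sup>2" for k
    define S where "S = (\<Sum>k. (\<alpha> k)\<^sup>2)"
    have stepN: "a (Suc k) \<le> a k - 2 * \<delta> * t k + L * (\<alpha> k)\<^sup>2" if "k \<ge> N" for k
    proof -
      have "f z - f (x k) \<le> - \<delta>" using N[OF that] by (simp add: \<delta>_def)
      then have "2 * t k * (f z - f (x k)) \<le> 2 * t k * (- \<delta>)" using t0[of k] by (intro mult_left_mono) auto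
      then show ?thesis using key[OF z, of k] by (simp add: a_def algebra_simps)
    qed
    have indu: "a (N+m) + 2 * \<delta> * (\<Sum>i<m. t (N+i)) \<le> a N + L * (\<Sum>i<m. (\<alpha> (N+i))\<^sup>2)" for m
    proof (induction m)
      case 0 then show ?case by simp
    next
      case (Suc m)
      have "a (N + Suc m) \<le> a (N+m) - 2 * \<delta> * t (N+m) + L * (\<alpha> (N+m))\<^sup>2"
        using stepN[of "N+m"] by simp
      then show ?case using Suc.IH by (simp add: algebra_simps)
    qed
    have sumS: "(\<Sum>i<m. (\<alpha> (N+i))\<^sup>2) \<le> S" for m
    proof -
      have "(\<Sum>i<m. (\<alpha> (N+i))\<^sup>2) \<le> (\<Sum>k<N+m. (\<alpha> k)\<^sup>2)"
        using sum_split_shift[of "\<lambda>k. (\<alpha> k)\<^sup>2" N m] by (simp add: sum_nonneg)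
      also have "\<dots> \<le> S" unfolding S_def using alpha_sq by (intro sum_le_suminf) auto
      finally show ?thesis .
    qed
    define Q where "Q = a N + L * S"
    have tsum0: "0 \<le> (\<Sum>i<m. t (N+i))" for m using t0 by (simp add: sum_nonneg)
    have aQ: "a (N+m) \<le> Q" for m
    proof -
      have "L * (\<Sum>i<m. (\<alpha> (N+i))\<^sup>2) \<le> L * S" by (rule mult_left_mono[OF sumS L0])
      moreover have "0 \<le> 2 * \<delta> * (\<Sum>i<m. t (N+i))" using \<delta> tsum0[of m] by simp
      ultimately show ?thesis using indu[of m] by (simp add: Q_def)
    qed
    have tQ: "2 * \<delta> * (\<Sum>i<m. t (N+i)) \<le> Q" for m
    proof -
      have "L * (\<Sum>i<m. (\<alpha> (N+i))\<^sup>2) \<le> L * S" by (rule mult_left_mono[OF sumS L0])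
      moreover have "0 \<le> a (N+m)" by (simp add: a_def)
      ultimately show ?thesis using indu[of m] by (simp add: Q_def)
    qed
    define R where "R = max (Max ((\<lambda>k. norm (x k)) ` {..N})) (norm z + sqrt Q)"
    have xR: "norm (x k) \<le> R" for k
    proof (cases "k \<le> N")
      case True
      then have "norm (x k) \<le> Max ((\<lambda>k. norm (x k)) ` {..N})" by (intro Max_ge) auto
      then show ?thesis by (simp add: R_def)
    next
      case False
      then obtain m where km: "k = N + m" by (metis le_add_diff_inverse nat_le_linear)
      have "norm (x k - z) = sqrt (a k)" by (simp add: a_def)
      also have "\<dots> \<le> sqrt Q" using aQ[of m] km by simp
      finally have "norm (x k - z) \<le> sqrt Q" .
      moreover have "norm (x k) \<le> norm z + norm (x k - z)"
        by (metis add.commute diff_add_cancel norm_triangle_ineq)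
      ultimately show ?thesis by (simp add: R_def)
    qed
    obtain M where M: "\<And>y g e. norm y \<le> R \<Longrightarrow> e \<le> \<epsilon> 0 \<Longrightarrow> g \<in> eps_subdiff f e y \<Longrightarrow> norm g \<le> M"
      using subgrad_bound[OF cont, of R "\<epsilon> 0"] by blast
    define M' where "M' = max 1 M"
    have M'1: "1 \<le> M'" by (simp add: M'_def)
    have aM: "\<alpha> k \<le> M' * t k" for k
    proof -
      have "norm (s k) \<le> M" using M[OF xR epsE s_sub] .
      then have mm: "max 1 (norm (s k)) \<le> M'" by (simp add: M'_def)
      have "\<alpha> k = max 1 (norm (s k)) * t k" by (simp add: t_def)
      also have "\<dots> \<le> M' * t k" using mm t0[of k] by (rule mult_right_mono)
      finally show ?thesis .
    qed
    have bnd: "(\<Sum>k<N+m. \<alpha> k) \<le> (\<Sum>k<N. \<alpha> k) + M' * (Q / (2*\<delta>))" for m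
    proof -
      have "(\<Sum>i<m. \<alpha> (N+i)) \<le> (\<Sum>i<m. M' * t (N+i))" using aM by (intro sum_mono) auto
      also have "\<dots> = M' * (\<Sum>i<m. t (N+i))" by (simp add: sum_distrib_left)
      also have "\<dots> \<le> M' * (Q / (2*\<delta>))"
        using tQ[of m] \<delta> M'1 by (intro mult_left_mono) (auto simp: field_simps)
      finally show ?thesis using sum_split_shift[of \<alpha> N m] by simp
    qed
    have "\<forall>\<^sub>F n in sequentially. (\<Sum>k<N. \<alpha> k) + M' * (Q / (2*\<delta>)) + 1 \<le> (\<Sum>k<n. \<alpha> k)"
      using alpha_div by (simp add: filterlim_at_top)
    then obtain n0 where n0: "\<And>n. n \<ge> n0 \<Longrightarrow> (\<Sum>k<N. \<alpha> k) + M' * (Q / (2*\<delta>)) + 1 \<le> (\<Sum>k<n. \<alpha> k)"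
      by (auto simp: eventually_sequentially)
    show False using n0[of "N + n0"] bnd[of n0] by simp
  qed
  have part1: "liminf (\<lambda>k. ereal (f (x k))) = (INF y\<in>C. ereal (f y))"
    using lower upper by (rule antisym[rotated])

  have part2: "\<exists>xs\<in>minimizers f C. x \<longlonglongrightarrow> xs" if ne: "minimizers f C \<noteq> {}"
  proof -
    have conv: "convergent (\<lambda>k. norm (x k - z))" if zm: "z \<in> minimizers f C" for z
    proof -
      have z: "z \<in> C" and zmin: "\<And>y. y \<in> C \<Longrightarrow> f z \<le> f y" using zm by (auto simp: minimizers_def)
      have "convergent (\<lambda>k. (norm (x k - z))\<^sup>2)"
      proof (rule quasi_fejer[where e = "\<lambda>k. L * (\<alpha> k)\<^sup>2"])
        fix k
        have "2 * t k * (f z - f (x k)) \<le> 0" using zmin[OF xC[of k]] t0[of k]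
          by (simp add: mult_nonneg_nonpos)
        then show "(norm (x (Suc k) - z))\<^sup>2 \<le> (norm (x k - z))\<^sup>2 + L * (\<alpha> k)\<^sup>2"
          using key[OF z, of k] by linarith
      next
        show "summable (\<lambda>k. L * (\<alpha> k)\<^sup>2)" using alpha_sq by (rule summable_mult)
      qed (use L0 in auto)
      then obtain d where "(\<lambda>k. (norm (x k - z))\<^sup>2) \<longlonglongrightarrow> d" by (auto simp: convergent_def)
      then have "(\<lambda>k. sqrt ((norm (x k - z))\<^sup>2)) \<longlonglongrightarrow> sqrt d" by (rule tendsto_real_sqrt)
      then show ?thesis by (auto simp: convergent_def)
    qed
    obtain z0 where z0: "z0 \<in> minimizers f C" using ne by blast
    have z0C: "z0 \<in> C" and z0min: "\<And>y. y \<in> C \<Longrightarrow> f z0 \<le> f y" using z0 by (auto simp: minimizers_def)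
    have "Bseq (\<lambda>k. norm (x k - z0))" using conv[OF z0] by (rule convergent_imp_Bseq)
    then obtain B where B: "\<And>k. norm (norm (x k - z0)) \<le> B" by (auto simp: Bseq_def)
    have bx: "bounded (range x)"
    proof (rule bounded_subset[OF bounded_cball[of z0 B]])
      show "range x \<subseteq> cball z0 B" using B by (auto simp: dist_norm norm_minus_commute)
    qed
    have infz: "(INF y\<in>C. ereal (f y)) = ereal (f z0)"
    proof (rule antisym)
      show "(INF y\<in>C. ereal (f y)) \<le> ereal (f z0)" using z0C by (rule INF_lower)
      show "ereal (f z0) \<le> (INF y\<in>C. ereal (f y))" using z0min by (auto intro: INF_greatest)
    qed
    obtain r where r: "strict_mono r" and rl: "((\<lambda>k. ereal (f (x k))) \<circ> r) \<longlonglongrightarrow> liminf (\<lambda>k. ereal (f (x k)))"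
      using liminf_subseq_lim by blast
    have "(\<lambda>n. ereal (f (x (r n)))) \<longlonglongrightarrow> ereal (f z0)" using rl part1 infz by (simp add: o_def)
    then have fr: "(\<lambda>n. f (x (r n))) \<longlonglongrightarrow> f z0" by (simp add: lim_ereal)
    have "bounded (range (x \<circ> r))" using bx by (rule bounded_subset) auto
    then obtain l q where q: "strict_mono q" and lq: "((x \<circ> r) \<circ> q) \<longlonglongrightarrow> l"
      using bounded_imp_convergent_subsequence by blast
    have lC: "l \<in> C" using closed_sequentially[OF C_closed _ lq] xC by auto
    have "(\<lambda>n. f (((x \<circ> r) \<circ> q) n)) \<longlonglongrightarrow> f l"
      using cont lq by (metis UNIV_I continuous_on_def isCont_tendsto_compose continuous_on_eq_continuous_at open_UNIV)
    moreover have "(\<lambda>n. f (((x \<circ> r) \<circ> q) n)) \<longlonglongrightarrow> f z0"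
      using LIMSEQ_subseq_LIMSEQ[OF fr q] by (simp add: o_def)
    ultimately have "f l = f z0" by (rule LIMSEQ_unique)
    then have lm: "l \<in> minimizers f C" using lC z0min by (auto simp: minimizers_def)
    obtain d where d: "(\<lambda>k. norm (x k - l)) \<longlonglongrightarrow> d" using conv[OF lm] by (auto simp: convergent_def)
    have "strict_mono (r \<circ> q)" using r q by (rule strict_mono_o)
    then have "((\<lambda>k. norm (x k - l)) \<circ> (r \<circ> q)) \<longlonglongrightarrow> d" using d by (intro LIMSEQ_subseq_LIMSEQ)
    moreover have "((\<lambda>k. norm (x k - l)) \<circ> (r \<circ> q)) \<longlonglongrightarrow> 0"
    proof -
      have "(\<lambda>n. ((x \<circ> r) \<circ> q) n - l) \<longlonglongrightarrow> 0" using lq by (rule LIM_zero)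
      then have "(\<lambda>n. norm (((x \<circ> r) \<circ> q) n - l)) \<longlonglongrightarrow> 0" by (rule tendsto_norm_zero)
      then show ?thesis by (simp add: o_def)
    qed
    ultimately have "d = 0" by (rule LIMSEQ_unique)
    then have "(\<lambda>k. norm (x k - l)) \<longlonglongrightarrow> 0" using d by simp
    then have "(\<lambda>k. x k - l) \<longlonglongrightarrow> 0" by (simp add: tendsto_norm_zero_iff)
    then have "x \<longlonglongrightarrow> l" by (rule LIM_zero_cancel)
    then show ?thesis using lm by blast
  qed
  show ?thesis using part1 part2 by blast
qed
end
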